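(* Let $c\in\mathbb{R}$ with $0<c<1$ and let $s\in\mathbb{C}$, $s\neq0$. Then $$\zeta(s+1)=\frac{\pi}{2s}\int_{-\infty}^{\infty}\frac{(c+it)^{-s}}{\sin^2\big(\pi(c+it)\big)}\,dt .$$
   Context: $\zeta$ is the Riemann zeta function (meromorphically continued). Powers $(c+it)^{-s}$ use the principal branch. *)

theory Defs
  imports "HOL-Complex_Analysis.Complex_Analysis"
begin

text \<open>The Riemann zeta function: the (unique) holomorphic function on the
  plane minus 1 that agrees with the Dirichlet series sum over n of n^(-s) on Re s > 1.
  Its value at the pole 1 is irrelevant here.\<close>

definition zeta :: "complex \<Rightarrow> complex" where
  "zeta = (THE f. f holomorphic_on (- {1}) \<and>
     (\<forall>s. 1 < Re s \<longrightarrow> f s = (\<Sum>n. 1 / (of_nat (Suc n)) powr s)) \<and> f 1 = 0)"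

end

theory Submission
  imports Defs
begin

lemma exp_sum_ge2: "exp a + exp (-a) \<ge> (2::real)"
proof -
  have "0 \<le> (exp (a/2) - exp (-a/2))^2" by simp
  also have "\<dots> = exp a + exp (-a) - 2"
    by (simp add: power2_eq_square algebra_simps flip: exp_add)
  finally show ?thesis by simp
qed

lemma norm_sin_Complex_sq:
  "norm (sin (Complex x y))^2 = (sin x)^2 + (exp(2*y) + exp(-2*y) - 2)/4"
proof -
  have "norm (sin (Complex x y))^2 = (exp(2*y) + exp(-2*y) - 2 * cos(2*x)) / 4"
    using norm_sin_squared[of "Complex x y"] by (simp add: exp_minus)
  also have "cos (2*x) = 1 - 2 * (sin x)^2" by (simp add: cos_double_sin)
  finally show ?thesis by (simp add: field_simps)
qed

lemma exp_abs_le: "exp (2 * \<bar>y::real\<bar>) \<le> exp(2*y) + exp(-2*y)"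
  by (cases "y \<ge> 0") auto

lemma norm_sin_lower1:
  "norm (sin (Complex x y))^2 \<ge> (sin x)^2 * exp (2*\<bar>y\<bar>) / 4"
proof -
  have s1: "(sin x)^2 \<le> 1" by (simp add: abs_square_le_1 abs_sin_le_one)
  have E: "exp(2*y) + exp(-2*y) \<ge> 2" using exp_sum_ge2[of "2*y"] by simp
  have "(sin x)^2 * exp (2*\<bar>y\<bar>) / 4 \<le> (sin x)^2 * (exp(2*y) + exp(-2*y) + 2) / 4"
    using exp_abs_le[of y] by (intro divide_right_mono mult_left_mono) auto
  also have "\<dots> = (sin x)^2 + (sin x)^2 * ((exp(2*y) + exp(-2*y) - 2)/4)"
    by (simp add: field_simps)
  also have "\<dots> \<le> (sin x)^2 + (exp(2*y) + exp(-2*y) - 2)/4"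
    using s1 E by (intro add_left_mono mult_left_le_one_le) auto
  finally show ?thesis by (simp add: norm_sin_Complex_sq)
qed

lemma norm_sin_lower2:
  "norm (sin (Complex x y))^2 \<ge> (exp (2*\<bar>y\<bar>) - 2) / 4"
proof -
  have "(exp (2*\<bar>y\<bar>) - 2) / 4 \<le> (exp(2*y) + exp(-2*y) - 2)/4"
    using exp_abs_le[of y] by (intro divide_right_mono) auto
  also have "\<dots> \<le> (sin x)^2 + (exp(2*y) + exp(-2*y) - 2)/4" by simp
  finally show ?thesis by (simp add: norm_sin_Complex_sq)
qed

lemma norm_powr_le: "norm (z powr w) \<le> norm z powr Re w * exp (\<bar>Im w\<bar> * pi)"
proof -
  have "- Im w * Arg z \<le> \<bar>Im w\<bar> * pi"
  proof -
    have "\<bar>Arg z\<bar> \<le> pi" using Arg_le_pi mpi_less_Arg[of z] by (simp add: abs_le_iff)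
    hence "\<bar>Im w * Arg z\<bar> \<le> \<bar>Im w\<bar> * pi" by (simp add: abs_mult mult_left_mono)
    thus ?thesis by linarith
  qed
  thus ?thesis by (simp add: norm_powr_complex mult_left_mono)
qed

lemma exp_decay_le: "exp (- pi * \<bar>t\<bar>) \<le> 1 / (1 + t^2)"
proof -
  have "1 + t^2 \<le> (1 + pi * \<bar>t\<bar> / 2)^2"
  proof -
    have "t^2 \<le> (pi/2)^2 * t^2" proof -
      have "1*1 \<le> (pi/2)*(pi/2)" using pi_gt3 by (intro mult_mono) auto
      thus ?thesis using mult_right_mono[of 1 "(pi/2)^2" "t^2"] by (simp add: power2_eq_square)
    qed
    thus ?thesis by (simp add: power2_eq_square field_simps) (smt (verit, ccfv_SIG) abs_ge_zero mult_nonneg_nonneg pi_gt_zero)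
  qed
  also have "\<dots> \<le> exp (pi * \<bar>t\<bar> / 2)^2"
    using exp_ge_add_one_self[of "pi * \<bar>t\<bar> / 2"] by (intro power_mono) auto
  also have "\<dots> = exp (pi * \<bar>t\<bar>)" by (simp flip: exp_double)
  finally have h: "1 + t^2 \<le> exp (pi * \<bar>t\<bar>)" .
  have "exp (- pi*\<bar>t\<bar>) = 1/exp(pi*\<bar>t\<bar>)" by (simp add: exp_minus inverse_eq_divide)
  also have "\<dots> \<le> 1/(1+t^2)" using h by (intro divide_left_mono) (auto intro!: mult_pos_pos add_pos_nonneg)
  finally show ?thesis .
qed

definition FF :: "real \<Rightarrow> complex \<Rightarrow> real \<Rightarrow> complex" where
  "FF x s t = Complex x t powr (- s) / (sin (of_real pi * Complex x t))^2"

lemma pi_Complex: "of_real pi * Complex x t = Complex (pi*x) (pi*t)"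
  by (simp add: complex_eq_iff)

lemma FF_bound_strip:
  assumes "0 < c" "c < 1"
  shows "\<exists>K. \<forall>s\<in>cball s0 1. \<forall>t. norm (FF c s t) \<le> K / (1+t^2)"
proof -
  define A where "A = cmod s0 + 1 + pi"
  have A: "A \<ge> pi" "A > 0" unfolding A_def using pi_gt_zero by (auto intro: add_nonneg_pos)
  define \<delta> where "\<delta> = pi / A"
  have d: "0 < \<delta>" "\<delta> \<le> 1" "A * \<delta> = pi" using A unfolding \<delta>_def by auto
  define m where "m = (sin (pi*c))^2"
  have "sin (pi*c) > 0" using assms by (intro sin_gt_zero) auto
  hence m: "m > 0" unfolding m_def by simp
  define B where "B = A*(-ln c) + A*(-ln \<delta>) + A*pi"
  define K where "K = 4 * exp B / m"
  show ?thesis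
  proof (intro exI ballI allI)
    fix s t assume s: "s \<in> cball s0 1"
    have ns: "cmod s \<le> cmod s0 + 1" using s norm_triangle_ineq2[of s s0]
      by (auto simp: dist_norm norm_minus_commute)
    have ReA: "\<bar>Re s\<bar> \<le> A" and ImA: "\<bar>Im s\<bar> \<le> A"
      using ns abs_Re_le_cmod[of s] abs_Im_le_cmod[of s] pi_gt_zero unfolding A_def by linarith+
    define L where "L = Complex c t"
    define \<rho> where "\<rho> = cmod L"
    have r1: "c \<le> \<rho>" using abs_Re_le_cmod[of L] assms unfolding \<rho>_def L_def by simp
    have r2: "\<rho> \<le> 1 + \<bar>t\<bar>" using cmod_le[of L] assms unfolding \<rho>_def L_def by simp
    have rpos: "\<rho> > 0" using r1 assms by simp
    have lnc: "ln c < 0" using assms by simp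
    have l1: "\<bar>ln \<rho>\<bar> \<le> - ln c + ln (1 + \<bar>t\<bar>)"
    proof (cases "\<rho> \<ge> 1")
      case True
      hence "0 \<le> ln \<rho>" "ln \<rho> \<le> ln (1 + \<bar>t\<bar>)" using r2 rpos by auto
      thus ?thesis using lnc by linarith
    next
      case False
      hence "ln \<rho> < 0" "ln c \<le> ln \<rho>" using r1 rpos assms by auto
      moreover have "0 \<le> ln (1 + \<bar>t\<bar>)" by simp
      ultimately show ?thesis by linarith
    qed
    have l2: "ln (1 + \<bar>t\<bar>) \<le> \<delta> * \<bar>t\<bar> - ln \<delta>"
    proof -
      have "ln (\<delta> * (1 + \<bar>t\<bar>)) \<le> \<delta> * (1 + \<bar>t\<bar>) - 1"
        using d by (intro ln_le_minus_one) (auto intro: mult_pos_pos add_pos_nonneg)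
      also have "ln (\<delta> * (1 + \<bar>t\<bar>)) = ln \<delta> + ln (1 + \<bar>t\<bar>)"
        using d(1) by (simp add: ln_mult add_pos_nonneg)
      finally show ?thesis using d by (simp add: algebra_simps)
    qed
    have e1: "- Re s * ln \<rho> \<le> A * (-ln c) + A*(-ln \<delta>) + pi * \<bar>t\<bar>"
    proof -
      have "- Re s * ln \<rho> \<le> \<bar>Re s\<bar> * \<bar>ln \<rho>\<bar>" by (simp add: abs_mult[symmetric])
      also have "\<dots> \<le> A * \<bar>ln \<rho>\<bar>" using ReA by (intro mult_right_mono) auto
      also have "\<dots> \<le> A * (- ln c + (\<delta> * \<bar>t\<bar> - ln \<delta>))"
        using l1 l2 A by (intro mult_left_mono) auto
      also have "\<dots> = A * (-ln c) + A*(-ln \<delta>) + (A*\<delta>) * \<bar>t\<bar>" by (simp add: algebra_simps)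
      finally show ?thesis using d by simp
    qed
    have e2: "\<bar>Im s\<bar> * pi \<le> A * pi" using ImA by (intro mult_right_mono) auto
    have np: "norm (L powr (-s)) \<le> exp (B + pi * \<bar>t\<bar>)"
    proof -
      have "norm (L powr (-s)) \<le> \<rho> powr Re (-s) * exp (\<bar>Im (-s)\<bar> * pi)"
        unfolding \<rho>_def by (rule norm_powr_le)
      also have "\<rho> powr Re (-s) = exp (- Re s * ln \<rho>)" using rpos by (simp add: powr_def)
      also have "exp (- Re s * ln \<rho>) * exp (\<bar>Im (-s)\<bar> * pi) = exp (- Re s * ln \<rho> + \<bar>Im s\<bar> * pi)"
        by (simp only: mult_exp_exp abs_minus_cancel uminus_complex.sel)
      also have "\<dots> \<le> exp (B + pi * \<bar>t\<bar>)"
      proof -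
        have "- Re s * ln \<rho> + \<bar>Im s\<bar> * pi \<le> B + pi * \<bar>t\<bar>" using e1 e2 unfolding B_def by linarith
        thus ?thesis by simp
      qed
      finally show ?thesis .
    qed
    have nsn: "norm (sin (of_real pi * L))^2 \<ge> m * exp (2*pi*\<bar>t\<bar>) / 4"
      using norm_sin_lower1[of "pi*c" "pi*t"] unfolding L_def pi_Complex m_def
      by (simp add: abs_mult mult.assoc)
    have nsn_pos: "m * exp (2*pi*\<bar>t\<bar>) / 4 > 0" using m by simp
    have "norm (FF c s t) = norm (L powr (-s)) / norm (sin (of_real pi * L))^2"
      unfolding FF_def L_def by (simp add: norm_divide norm_power)
    also have "\<dots> \<le> exp (B + pi * \<bar>t\<bar>) / (m * exp (2*pi*\<bar>t\<bar>) / 4)"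
      using np nsn nsn_pos by (intro frac_le) auto
    also have "\<dots> = K * exp (- pi * \<bar>t\<bar>)"
      unfolding K_def using m by (simp add: field_simps exp_add[symmetric] exp_diff)
    also have "\<dots> \<le> K * (1 / (1 + t^2))"
      using exp_decay_le[of t] m unfolding K_def by (intro mult_left_mono) auto
    finally show "norm (FF c s t) \<le> K / (1+t^2)" by simp
  qed
qed

lemma Complex_not_nonpos: "0 < x \<Longrightarrow> Complex x t \<notin> \<real>\<^sub>\<le>\<^sub>0"
  by (auto simp: complex_nonpos_Reals_iff)

lemma sin_pic: "0 < c \<Longrightarrow> c < 1 \<Longrightarrow> sin (pi*c) \<noteq> 0"
  using sin_gt_zero[of "pi*c"] by auto

lemma sin_Complex_nz: "sin (pi*c) \<noteq> 0 \<Longrightarrow> sin (of_real pi * Complex c t) \<noteq> 0"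
proof
  assume c: "sin (pi*c) \<noteq> 0" and z: "sin (of_real pi * Complex c t) = 0"
  hence "0 < (sin (pi*c))^2 * exp (2*\<bar>pi*t\<bar>) / 4" by simp
  also have "\<dots> \<le> norm (sin (of_real pi * Complex c t))^2"
    unfolding pi_Complex by (rule norm_sin_lower1)
  finally show False using z by simp
qed

lemma FF_alt: "0 < x \<Longrightarrow> FF x s t = exp (- s * Ln (Complex x t)) / (sin (of_real pi * Complex x t))^2"
  unfolding FF_def powr_def by (auto simp: complex_eq_iff)

lemma cont_Complex: "continuous_on S (\<lambda>t. Complex x (f t))" if "continuous_on S f"
  unfolding Complex_eq by (intro continuous_intros that)

lemma FF_cont_joint:
  assumes "0 < c" "sin (pi*c) \<noteq> 0"
  shows "continuous_on UNIV (\<lambda>p. FF c (fst p) (snd p))"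
    and "continuous_on UNIV (\<lambda>p. - Ln (Complex c (snd p)) * FF c (fst p) (snd p))"
proof -
  have cL: "continuous_on UNIV (\<lambda>p::complex\<times>real. Complex c (snd p))"
    by (intro cont_Complex continuous_intros)
  have cLn: "continuous_on UNIV (\<lambda>p::complex\<times>real. Ln (Complex c (snd p)))"
    by (intro continuous_intros cL) (use assms Complex_not_nonpos in auto)
  have cS: "continuous_on UNIV (\<lambda>p::complex\<times>real. sin (of_real pi * Complex c (snd p)))"
    by (intro continuous_intros cL)
  have "continuous_on UNIV (\<lambda>p::complex\<times>real. exp (- fst p * Ln (Complex c (snd p))) / (sin (of_real pi * Complex c (snd p)))^2)"
    by (intro continuous_intros cLn cS) (use sin_Complex_nz[OF assms(2)] in auto)
  thus *: "continuous_on UNIV (\<lambda>p. FF c (fst p) (snd p))"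
    using FF_alt[OF assms(1)] by simp
  show "continuous_on UNIV (\<lambda>p. - Ln (Complex c (snd p)) * FF c (fst p) (snd p))"
    by (intro continuous_intros cLn *)
qed

lemma FF_cont_t:
  assumes "0 < c" "sin (pi*c) \<noteq> 0"
  shows "continuous_on S (FF c s)"
proof -
  have "continuous_on UNIV ((\<lambda>p. FF c (fst p) (snd p)) \<circ> (\<lambda>t. (s, t)))"
    by (intro continuous_on_compose FF_cont_joint(1)[OF assms, THEN continuous_on_subset] continuous_intros) auto
  thus ?thesis by (auto simp: o_def intro: continuous_on_subset)
qed

lemma FF_deriv:
  assumes "0 < c"
  shows "((\<lambda>s. FF c s t) has_field_derivative (- Ln (Complex c t) * FF c s t)) (at s within U)"
proof -
  have nz: "Complex c t \<noteq> 0" using assms by (auto simp: complex_eq_iff)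
  have m: "((\<lambda>s::complex. -s) has_field_derivative -1) (at s within U)"
    by (intro derivative_eq_intros) auto
  have "((\<lambda>s. Complex c t powr (- s)) has_field_derivative
      (Ln (Complex c t) * Complex c t powr (- s) * (-1))) (at s within U)"
    by (rule DERIV_chain2[OF has_field_derivative_powr_right[OF nz] m])
  hence "((\<lambda>s. Complex c t powr (- s) / (sin (of_real pi * Complex c t))^2) has_field_derivative
      (Ln (Complex c t) * Complex c t powr (- s) * (-1)) / (sin (of_real pi * Complex c t))^2) (at s within U)"
    by (rule DERIV_cdivide)
  thus ?thesis unfolding FF_def by (simp add: field_simps)
qed

lemma D_has_integral:
  assumes "a \<le> b"
  shows "((\<lambda>t::real. 1/(1+t^2)) has_integral (arctan b - arctan a)) {a..b}"
  using assms
  by (intro fundamental_theorem_of_calculus)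
     (auto intro!: derivative_eq_intros simp flip: has_real_derivative_iff_has_vector_derivative
           simp: divide_simps)

lemma D_integral_UNIV:
  "(\<lambda>t::real. 1/(1+t^2)) integrable_on UNIV \<and>
   ((\<lambda>k. integral {-real k..real k} (\<lambda>t::real. 1/(1+t^2))) \<longlonglongrightarrow> integral UNIV (\<lambda>t::real. 1/(1+t^2)))"
proof -
  define f where "f = (\<lambda>k::nat. \<lambda>t::real. if t \<in> {-real k..real k} then 1/(1+t^2) else 0)"
  have int: "integral UNIV (f k) = integral {-real k..real k} (\<lambda>t::real. 1/(1+t^2))" for k
    unfolding f_def by (rule integral_restrict_UNIV)
  have ik: "integral {-real k..real k} (\<lambda>t::real. 1/(1+t^2)) = 2 * arctan (real k)" for k
    using D_has_integral[of "-real k" "real k"] by (simp add: arctan_minus integral_unique)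
  have "(f k) integrable_on UNIV" for k
    unfolding f_def integrable_restrict_UNIV using D_has_integral[of "-real k" "real k"]
    by (auto simp: integrable_on_def)
  moreover have "f k x \<le> f (Suc k) x" for k x
    unfolding f_def by auto
  moreover have "(\<lambda>k. f k x) \<longlonglongrightarrow> 1/(1+x^2)" for x
  proof -
    obtain n::nat where "\<bar>x\<bar> \<le> real n" using real_arch_simple by blast
    hence "\<forall>k\<ge>n. f k x = 1/(1+x^2)" unfolding f_def by auto
    thus ?thesis by (intro tendsto_eventually) (auto simp: eventually_sequentially)
  qed
  moreover have "bounded (range (\<lambda>k. integral UNIV (f k)))"
  proof -
    have "\<bar>2 * arctan (real k)\<bar> \<le> pi" for k
      using arctan_bounded[of "real k"] by auto
    thus ?thesis unfolding bounded_iff int ik by (auto intro!: exI[of _ pi])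
  qed
  ultimately have "(\<lambda>t::real. 1/(1+t^2)) integrable_on UNIV \<and>
     ((\<lambda>k. integral UNIV (f k)) \<longlonglongrightarrow> integral UNIV (\<lambda>t::real. 1/(1+t^2)))"
    by (intro monotone_convergence_increasing) auto
  thus ?thesis unfolding int .
qed

lemma D_integral_pi: "integral UNIV (\<lambda>t::real. 1/(1+t^2)) = pi"
proof -
  have ik: "integral {-real k..real k} (\<lambda>t::real. 1/(1+t^2)) = 2 * arctan (real k)" for k
    using D_has_integral[of "-real k" "real k"] by (simp add: arctan_minus integral_unique)
  have "(\<lambda>k. 2 * arctan (real k)) \<longlonglongrightarrow> 2 * (pi/2)"
    by (intro tendsto_mult tendsto_const filterlim_compose[OF tendsto_arctan_at_top filterlim_real_sequentially])
  hence "(\<lambda>k. integral {-real k..real k} (\<lambda>t::real. 1/(1+t^2))) \<longlonglongrightarrow> pi" unfolding ik by simp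
  thus ?thesis using D_integral_UNIV LIMSEQ_unique by blast
qed

lemma cmul_real_int: "f integrable_on S \<Longrightarrow> (\<lambda>x. (K::real) * f x) integrable_on S"
  using integrable_cmul[of f S K] by simp

lemma trunc_lemma:
  fixes f :: "real \<Rightarrow> complex"
  assumes cont: "continuous_on UNIV f" and bd: "\<And>t. norm (f t) \<le> K / (1+t^2)"
  shows "f integrable_on UNIV"
    and "(\<lambda>k. integral {-real k..real k} f) \<longlonglongrightarrow> integral UNIV f"
    and "\<And>k. norm (integral UNIV f - integral {-real k..real k} f) \<le> K * (pi - 2 * arctan (real k))"
proof -
  define fk where "fk = (\<lambda>k::nat. \<lambda>t::real. if t \<in> {-real k..real k} then f t else 0)"
  have intk: "integral UNIV (fk k) = integral {-real k..real k} f" for k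
    unfolding fk_def by (rule integral_restrict_UNIV)
  have fint: "f integrable_on {a..b}" for a b
    by (rule integrable_continuous_real) (rule continuous_on_subset[OF cont], auto)
  have fkint: "(fk k) integrable_on UNIV" for k
    unfolding fk_def integrable_restrict_UNIV by (rule fint)
  have Dint: "(\<lambda>t::real. 1/(1+t^2)) integrable_on UNIV" using D_integral_UNIV by blast
  have hint: "(\<lambda>t::real. K * (1/(1+t^2))) integrable_on UNIV"
    by (intro cmul_real_int Dint)
  have K0: "K \<ge> 0" using bd[of 0] norm_ge_zero[of "f 0"] by simp (metis norm_ge_zero order.trans)
  have le: "norm (fk k t) \<le> K * (1/(1+t^2))" for k t
    unfolding fk_def using bd[of t] K0 by auto
  have conv: "(\<lambda>k. fk k t) \<longlonglongrightarrow> f t" for t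
  proof -
    obtain n::nat where "\<bar>t\<bar> \<le> real n" using real_arch_simple by blast
    hence "\<forall>k\<ge>n. fk k t = f t" unfolding fk_def by auto
    thus ?thesis by (intro tendsto_eventually) (auto simp: eventually_sequentially)
  qed
  have dc: "f integrable_on UNIV" "(\<lambda>k. integral UNIV (fk k)) \<longlonglongrightarrow> integral UNIV f"
    using dominated_convergence[of fk UNIV "\<lambda>t. K * (1/(1+t^2))" f, OF fkint hint le conv] by auto
  thus "f integrable_on UNIV" "(\<lambda>k. integral {-real k..real k} f) \<longlonglongrightarrow> integral UNIV f"
    unfolding intk by auto
  fix k :: nat
  define Dk where "Dk = (\<lambda>t::real. if t \<in> {-real k..real k} then 1/(1+t^2) else 0)"
  have Dkint: "Dk integrable_on UNIV" unfolding Dk_def integrable_restrict_UNIV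
    using D_has_integral[of "-real k" "real k"] by (auto simp: integrable_on_def)
  have iDk: "integral UNIV Dk = 2 * arctan (real k)"
    unfolding Dk_def integral_restrict_UNIV
    using D_has_integral[of "-real k" "real k"] by (simp add: arctan_minus integral_unique)
  have iK0: "integral UNIV (\<lambda>t. K *\<^sub>R (1/(1+t^2))) = K *\<^sub>R integral UNIV (\<lambda>t::real. 1/(1+t^2))"
    by (rule integral_cmul)
  hence iK: "integral UNIV (\<lambda>t. K / (1+t^2)) = K * pi" by (simp add: D_integral_pi)
  have "norm (integral UNIV f - integral {-real k..real k} f) = norm (integral UNIV (\<lambda>t. f t - fk k t))"
    using dc(1) fkint[of k] by (simp add: integral_diff intk)
  also have "\<dots> \<le> integral UNIV (\<lambda>t. K * (1/(1+t^2)) - K * Dk t)"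
  proof (rule integral_norm_bound_integral)
    show "(\<lambda>t. f t - fk k t) integrable_on UNIV" using dc(1) fkint[of k] by (rule integrable_diff)
    show "(\<lambda>t. K * (1/(1+t^2)) - K * Dk t) integrable_on UNIV"
      by (intro integrable_diff hint cmul_real_int Dkint)
    fix t :: real
    show "norm (f t - fk k t) \<le> K * (1/(1+t^2)) - K * Dk t"
      unfolding fk_def Dk_def using bd[of t] by auto
  qed
  also have "\<dots> = K * pi - K * (2 * arctan (real k))"
    using hint Dkint iK cmul_real_int[OF Dkint, of K] cmul_real_int[OF Dint, of K]
    by (simp add: integral_diff D_integral_pi iDk)
  finally show "norm (integral UNIV f - integral {-real k..real k} f) \<le> K * (pi - 2 * arctan (real k))"
    by (simp add: algebra_simps)
qed

definition gg :: "real \<Rightarrow> complex \<Rightarrow> complex" where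
  "gg c s = integral UNIV (FF c s)"

lemma gg_holo:
  assumes "0 < c" "c < 1"
  shows "gg c holomorphic_on UNIV"
proof -
  have "gg c field_differentiable (at s0)" for s0
  proof -
    obtain K where K: "\<forall>s\<in>cball s0 1. \<forall>t. norm (FF c s t) \<le> K / (1+t^2)"
      using FF_bound_strip[OF assms] by blast
    define fn where "fn = (\<lambda>k::nat. \<lambda>s. integral (cbox (-real k) (real k)) (FF c s))"
    have hol: "fn k holomorphic_on UNIV" for k
      unfolding fn_def
    proof (rule leibniz_rule_holomorphic[where fx = "\<lambda>s t. - Ln (Complex c t) * FF c s t"])
      show "((\<lambda>s. FF c s t) has_field_derivative (- Ln (Complex c t) * FF c s t)) (at s within UNIV)" for s t
        by (rule FF_deriv) (use assms in auto)
      show "FF c s integrable_on cbox (- real k) (real k)" for s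
        by (rule integrable_continuous) (rule FF_cont_t[OF assms(1) sin_pic[OF assms]])
      show "continuous_on (UNIV \<times> cbox (- real k) (real k)) (\<lambda>(s, t). - Ln (Complex c t) * FF c s t)"
        using continuous_on_subset[OF FF_cont_joint(2)[OF assms(1) sin_pic[OF assms]]] by (simp add: case_prod_beta')
    qed auto
    have ul: "uniform_limit (cball s0 1) fn (gg c) sequentially"
    proof (rule uniform_limitI)
      fix e :: real assume e: "e > 0"
      have "(\<lambda>k. K * (pi - 2 * arctan (real k))) \<longlonglongrightarrow> K * (pi - 2 * (pi/2))"
        by (intro tendsto_intros filterlim_compose[OF tendsto_arctan_at_top filterlim_real_sequentially])
      hence "\<forall>\<^sub>F k in sequentially. K * (pi - 2 * arctan (real k)) < e"
        using e by (auto dest: order_tendstoD)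
      thus "\<forall>\<^sub>F k in sequentially. \<forall>s\<in>cball s0 1. dist (fn k s) (gg c s) < e"
      proof eventually_elim
        case (elim k)
        show ?case
        proof
          fix s assume s: "s \<in> cball s0 1"
          have "dist (fn k s) (gg c s) = norm (integral UNIV (FF c s) - integral {-real k..real k} (FF c s))"
            unfolding fn_def gg_def by (simp add: dist_norm norm_minus_commute)
          also have "\<dots> \<le> K * (pi - 2 * arctan (real k))"
            by (rule trunc_lemma(3)[OF FF_cont_t[OF assms(1) sin_pic[OF assms]]]) (use K s in auto)
          finally show "dist (fn k s) (gg c s) < e" using elim by simp
        qed
      qed
    qed
    have ev: "\<forall>\<^sub>F n in sequentially. continuous_on (cball s0 1) (fn n) \<and> fn n holomorphic_on ball s0 1"
    proof (intro always_eventually allI conjI)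
      fix n show "continuous_on (cball s0 1) (fn n)"
        using hol[of n] holomorphic_on_imp_continuous_on holomorphic_on_subset by blast
      show "fn n holomorphic_on ball s0 1" using hol[of n] holomorphic_on_subset by blast
    qed
    obtain "continuous_on (cball s0 1) (gg c)" "gg c holomorphic_on ball s0 1"
      by (rule holomorphic_uniform_limit[OF ev ul]) auto
    thus ?thesis
      by (meson centre_in_ball holomorphic_on_imp_differentiable_at open_ball zero_less_one)
  qed
  thus ?thesis by (simp add: field_differentiable_at_within holomorphic_on_def)
qed

lemma gg_integrable:
  assumes "0 < c" "c < 1"
  shows "FF c s integrable_on UNIV"
    and "(\<lambda>k. integral {-real k..real k} (FF c s)) \<longlonglongrightarrow> gg c s"
proof -
  obtain K where K: "\<forall>s'\<in>cball s 1. \<forall>t. norm (FF c s' t) \<le> K / (1+t^2)"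
    using FF_bound_strip[OF assms] by blast
  hence "\<And>t. norm (FF c s t) \<le> K / (1+t^2)" by auto
  from trunc_lemma(1,2)[OF FF_cont_t[OF assms(1) sin_pic[OF assms]] this]
  show "FF c s integrable_on UNIV" "(\<lambda>k. integral {-real k..real k} (FF c s)) \<longlonglongrightarrow> gg c s"
    unfolding gg_def by auto
qed

lemma has_contour_integral_vertical:
  fixes f :: "complex \<Rightarrow> complex"
  assumes "a < b"
  shows "(f has_contour_integral I) (linepath (Complex x a) (Complex x b)) \<longleftrightarrow>
         ((\<lambda>t. f (Complex x t) * \<i>) has_integral I) {a..b}"
proof -
  define A B where "A = Complex x a" and "B = Complex x b"
  have BA: "B - A = \<i> * of_real (b - a)" unfolding A_def B_def by (simp add: complex_eq_iff)
  have lp: "linepath A B u = Complex x ((b - a) * u + a)" for u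
    unfolding linepath_def A_def B_def by (simp add: complex_eq_iff scaleR_conv_of_real algebra_simps)
  have "((\<lambda>t. f (Complex x t) * \<i>) has_integral I) (cbox a b) \<longleftrightarrow>
          ((\<lambda>u. f (Complex x ((b - a) *\<^sub>R u + a)) * \<i>) has_integral I /\<^sub>R (b - a)) (cbox ((a - a) /\<^sub>R (b - a)) ((b - a) /\<^sub>R (b - a)))"
    using has_integral_affinity_iff[of "b - a" "\<lambda>t. f (Complex x t) * \<i>" a I a b] assms by simp
  also have "cbox ((a - a) /\<^sub>R (b - a)) ((b - a) /\<^sub>R (b - a)) = {0..1::real}" using assms by simp
  also have "(\<lambda>u. f (Complex x ((b - a) *\<^sub>R u + a)) * \<i>) =
               (\<lambda>u. inverse (b - a) *\<^sub>R (f (linepath A B u) * (B - A)))"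
    using assms by (auto simp: fun_eq_iff lp BA scaleR_conv_of_real field_simps)
  also have "((\<lambda>u. inverse (b - a) *\<^sub>R (f (linepath A B u) * (B - A))) has_integral I /\<^sub>R (b - a)) {0..1} \<longleftrightarrow>
               ((\<lambda>u. f (linepath A B u) * (B - A)) has_integral I) {0..1}"
    by (rule has_integral_cmul_iff) (use assms in simp)
  also have "\<dots> \<longleftrightarrow> (f has_contour_integral I) (linepath A B)"
    by (rule has_contour_integral_linepath[symmetric])
  finally show ?thesis unfolding A_def B_def by simp
qed

lemma contour_integral_vertical:
  fixes f :: "complex \<Rightarrow> complex"
  assumes "a < b" "continuous_on (closed_segment (Complex x a) (Complex x b)) f"
  shows "contour_integral (linepath (Complex x a) (Complex x b)) f = \<i> * integral {a..b} (\<lambda>t. f (Complex x t))"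
proof -
  have "f contour_integrable_on linepath (Complex x a) (Complex x b)"
    by (rule contour_integrable_continuous_linepath[OF assms(2)])
  then obtain I where I: "(f has_contour_integral I) (linepath (Complex x a) (Complex x b))"
    by (auto simp: contour_integrable_on_def)
  hence "((\<lambda>t. f (Complex x t) * \<i>) has_integral I) {a..b}"
    using has_contour_integral_vertical[OF assms(1)] by blast
  hence "((\<lambda>t. (f (Complex x t) * \<i>) * (- \<i>)) has_integral I * (- \<i>)) {a..b}"
    by (rule has_integral_mult_left)
  hence "((\<lambda>t. f (Complex x t)) has_integral I * (- \<i>)) {a..b}" by (simp add: mult.assoc)
  hence "integral {a..b} (\<lambda>t. f (Complex x t)) = I * (- \<i>)" by (rule integral_unique)
  thus ?thesis using contour_integral_unique[OF I] by (simp add: algebra_simps complex_i_mult_minus)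
qed

lemma sin_pi_zero_int:
  fixes z :: complex
  assumes "sin (of_real pi * z) = 0"
  shows "\<exists>n::int. z = of_int n"
proof -
  from assms obtain n :: int where "of_real pi * z = of_real (of_int n * pi)" unfolding sin_eq_0 by blast
  hence "z = of_int n" by (simp add: field_simps)
  thus ?thesis by blast
qed

lemma alg_id:
  fixes P Q Sn C p s :: complex
  assumes "Sn \<noteq> 0" "p \<noteq> 0" "Sn^2 + C^2 = 1"
  shows "- (((((-s) * Q) * C + (- Sn * p) * P) * (p * Sn) - (P * C) * (p * (C * p))) / ((p * Sn) * (p * Sn)))
         = P / Sn^2 + s / p * (Q * C / Sn)"
proof -
  have num: "- ((((-s) * Q) * C + (- Sn * p) * P) * (p * Sn) - (P * C) * (p * (C * p))) =
        s*Q*C*p*Sn + P*p^2*(Sn^2 + C^2)" by (simp add: algebra_simps power2_eq_square)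
  show ?thesis unfolding minus_divide_left num assms(3) using assms(1,2)
    by (simp add: field_simps power2_eq_square)
qed

lemma prim_deriv:
  assumes "0 < Re z" "sin (of_real pi * z) \<noteq> 0"
  shows "((\<lambda>z. - (z powr (-s) * cos (of_real pi * z) / (of_real pi * sin (of_real pi * z)))) has_field_derivative
           (z powr (-s) / (sin (of_real pi * z))^2 + s / of_real pi * (z powr (-s-1) * cos (of_real pi * z) / sin (of_real pi * z)))) (at z within S)"
proof -
  have nz: "z \<notin> \<real>\<^sub>\<le>\<^sub>0" using assms by (auto simp: complex_nonpos_Reals_iff)
  have d1: "((\<lambda>z. z powr (-s)) has_field_derivative (-s) * z powr (-s - 1)) (at z within S)"
    by (rule has_field_derivative_at_within[OF has_field_derivative_powr[OF nz]])
  have d2: "((\<lambda>z. cos (of_real pi * z)) has_field_derivative (- sin (of_real pi * z) * of_real pi)) (at z within S)"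
    by (auto intro!: derivative_eq_intros)
  have d3: "((\<lambda>z. of_real pi * sin (of_real pi * z)) has_field_derivative of_real pi * (cos (of_real pi * z) * of_real pi)) (at z within S)"
    by (auto intro!: derivative_eq_intros)
  note d4 = DERIV_divide[OF DERIV_mult[OF d1 d2] d3]
  have "of_real pi * sin (of_real pi * z) \<noteq> 0" using assms by simp
  from DERIV_minus[OF d4[OF this]] show ?thesis
    apply (rule DERIV_cong)
    using alg_id[where P="z powr (-s)" and Q="z powr (-s-1)" and Sn="sin (of_real pi * z)" and C="cos (of_real pi * z)" and p="of_real pi" and s=s] assms
    by simp
qed

lemma cos_pi_nat_nz: "cos (of_real pi * of_nat n :: complex) \<noteq> 0"
proof -
  have "of_real pi * of_nat n = (of_real (real n * pi) :: complex)" by simp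
  hence "cos (of_real pi * of_nat n :: complex) = of_real ((-1)^n)" by (simp only: cos_of_real cos_npi)
  thus ?thesis by simp
qed

lemma sin_pi_nat: "sin (of_real pi * of_nat n :: complex) = 0"
proof -
  have "of_real pi * of_nat n = (of_real (real n * pi) :: complex)" by simp
  thus ?thesis by (simp only: sin_of_real sin_npi of_real_0)
qed

lemma residue_k:
  assumes "n \<ge> 1"
  shows "residue (\<lambda>w. (w powr (-s-1) * cos (of_real pi * w)) / sin (of_real pi * w)) (of_nat n)
         = of_nat n powr (-s-1) / of_real pi"
proof -
  have bpos: "w \<notin> \<real>\<^sub>\<le>\<^sub>0" if "w \<in> ball (of_nat n) (1/2)" for w :: complex
  proof -
    have "\<bar>Re w - real n\<bar> \<le> cmod (w - of_nat n)" using abs_Re_le_cmod[of "w - of_nat n"] by simp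
    also have "\<dots> < 1/2" using that by (simp add: dist_norm norm_minus_commute)
    finally have "Re w > 0" using assms by linarith
    thus ?thesis by (auto simp: complex_nonpos_Reals_iff)
  qed
  have "residue (\<lambda>w. (w powr (-s-1) * cos (of_real pi * w)) / sin (of_real pi * w)) (of_nat n)
        = (of_nat n powr (-s-1) * cos (of_real pi * of_nat n)) / (cos (of_real pi * of_nat n) * of_real pi)"
  proof (rule residue_simple_pole_deriv[where s = "ball (of_nat n) (1/2)"])
    show "(\<lambda>w. w powr (-s-1) * cos (of_real pi * w)) holomorphic_on ball (of_nat n) (1/2)"
      using bpos by (intro holomorphic_intros) auto
    show "(\<lambda>w. sin (of_real pi * w)) holomorphic_on ball (of_nat n) (1/2)"
      by (intro holomorphic_intros)
    show "((\<lambda>w. sin (of_real pi * w)) has_field_derivative cos (of_real pi * of_nat n) * of_real pi) (at (of_nat n :: complex))"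
      by (auto intro!: derivative_eq_intros)
    show "(of_nat n :: complex) powr (-s-1) * cos (of_real pi * of_nat n) \<noteq> 0"
      using assms cos_pi_nat_nz[of n] by (auto simp: powr_def)
    show "sin (of_real pi * of_nat n :: complex) = 0" by (rule sin_pi_nat)
    show "cos (of_real pi * of_nat n :: complex) * of_real pi \<noteq> 0" using cos_pi_nat_nz[of n] by simp
  qed auto
  also have "\<dots> = of_nat n powr (-s-1) / of_real pi" using cos_pi_nat_nz[of n] by (simp add: field_simps)
  finally show ?thesis .
qed

lemma int_half_not: "of_int m \<noteq> real N + 1/2"
proof
  assume "of_int m = real N + 1/2"
  hence "of_int (2*m) = (of_int (2 * int N + 1) :: real)" by simp
  hence "2*m = 2 * int N + 1" by (simp only: of_int_eq_iff)
  thus False by presburger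
qed

lemma rect_identity:
  fixes s :: complex and N :: nat and c :: real
  assumes c: "0 < c" "c < 1" and N: "N \<ge> 1"
  defines "X \<equiv> real N + 1/2" and "T \<equiv> real N"
  defines "H \<equiv> (\<lambda>z::complex. z powr (-s) / (sin (of_real pi * z))^2)"
  shows "\<i> * integral {-T..T} (FF c s) =
           contour_integral (linepath (Complex c (-T)) (Complex X (-T))) H
         + \<i> * integral {-T..T} (FF X s)
         + contour_integral (linepath (Complex X T) (Complex c T)) H
         + (2 * \<i> * s / of_real pi) * (\<Sum>n=1..N. of_nat n powr (-s-1))"
proof -
  define k where "k = (\<lambda>w::complex. (w powr (-s-1) * cos (of_real pi * w)) / sin (of_real pi * w))"
  define a1 a2 a3 a4 where "a1 = Complex c (-T)" and "a2 = Complex X (-T)"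
      and "a3 = Complex X T" and "a4 = Complex c T"
  have T1: "T \<ge> 1" unfolding T_def using N by simp
  have cX: "c < X" unfolding X_def using c N by simp
  define \<Omega> where "\<Omega> = {z::complex. 0 < Re z} \<inter> {z. sin (of_real pi * z) \<noteq> 0}"
  have o\<Omega>: "open \<Omega>" unfolding \<Omega>_def
    by (intro open_Int open_halfspace_Re_gt open_Collect_neq continuous_intros)
  have le13: "Re a1 \<le> Re a3" "Im a1 \<le> Im a3" unfolding a1_def a3_def using cX T1 by auto
  have PI: "path_image (rectpath a1 a3) = cbox a1 a3 - box a1 a3"
    by (rule path_image_rectpath_cbox_minus_box[OF le13])
  have noint: "z \<noteq> of_int m" if "z \<in> cbox a1 a3 - box a1 a3" for z m
  proof
    assume z: "z = of_int m"
    have "c \<le> of_int m" "of_int m \<le> X"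
      using that unfolding z a1_def a3_def by (auto simp: in_cbox_complex_iff)
    moreover have "\<not> (c < of_int m \<and> of_int m < X)"
      using that T1 unfolding z a1_def a3_def by (auto simp: in_box_complex_iff)
    ultimately have "of_int m = c \<or> of_int m = X" by linarith
    moreover have "of_int m \<noteq> c"
    proof
      assume "of_int m = c"
      hence "0 < (of_int m :: real)" "(of_int m :: real) < 1" using c by auto
      thus False by simp
    qed
    moreover have "of_int m \<noteq> X" unfolding X_def by (rule int_half_not)
    ultimately show False by blast
  qed
  have PI\<Omega>: "path_image (rectpath a1 a3) \<subseteq> \<Omega>"
  proof
    fix z assume z: "z \<in> path_image (rectpath a1 a3)"
    hence zc: "z \<in> cbox a1 a3 - box a1 a3" using PI by simp
    hence "Re z \<ge> c" unfolding a1_def a3_def by (auto simp: in_cbox_complex_iff)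
    moreover have "sin (of_real pi * z) \<noteq> 0" using noint[OF zc] sin_pi_zero_int by blast
    ultimately show "z \<in> \<Omega>" unfolding \<Omega>_def using c by auto
  qed
  have nn: "z \<notin> \<real>\<^sub>\<le>\<^sub>0" if "z \<in> \<Omega>" for z
    using that unfolding \<Omega>_def by (auto simp: complex_nonpos_Reals_iff)
  have Hhol: "H holomorphic_on \<Omega>" unfolding H_def
    by (intro holomorphic_intros) (use nn in \<open>auto simp: \<Omega>_def\<close>)
  have khol: "k holomorphic_on \<Omega>" unfolding k_def
    by (intro holomorphic_intros) (use nn in \<open>auto simp: \<Omega>_def\<close>)
  have vp: "valid_path (rectpath a1 a3)" by simp
  have Hint: "H contour_integrable_on rectpath a1 a3"
    by (rule contour_integrable_holomorphic_simple[OF Hhol o\<Omega> vp PI\<Omega>])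
  have kint: "k contour_integrable_on rectpath a1 a3"
    by (rule contour_integrable_holomorphic_simple[OF khol o\<Omega> vp PI\<Omega>])
  \<comment> \<open>Integration by parts on the closed contour\<close>
  have "((\<lambda>z. H z + s / of_real pi * k z) has_contour_integral 0) (rectpath a1 a3)"
  proof (rule Cauchy_theorem_primitive[OF _ vp PI\<Omega>])
    fix z assume "z \<in> \<Omega>"
    thus "((\<lambda>z. - (z powr (-s) * cos (of_real pi * z) / (of_real pi * sin (of_real pi * z)))) has_field_derivative
           H z + s / of_real pi * k z) (at z within \<Omega>)"
      unfolding H_def k_def \<Omega>_def by (intro prim_deriv) auto
  qed simp
  moreover have "((\<lambda>z. H z + s / of_real pi * k z) has_contour_integral
      (contour_integral (rectpath a1 a3) H + s / of_real pi * contour_integral (rectpath a1 a3) k)) (rectpath a1 a3)"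
    by (intro has_contour_integral_add has_contour_integral_lmul has_contour_integral_integral Hint kint)
  ultimately have eqHk: "contour_integral (rectpath a1 a3) H = - (s / of_real pi) * contour_integral (rectpath a1 a3) k"
    using has_contour_integral_unique by (simp add: eq_neg_iff_add_eq_0)
  define S where "S = {z::complex. c/2 < Re z} \<inter> {z. Re z < X + 1/2}"
  define pts where "pts = (\<lambda>n::nat. (of_nat n :: complex)) ` {1..N}"
  have cbS: "cbox a1 a3 \<subseteq> S" unfolding S_def a1_def a3_def using c by (auto simp: in_cbox_complex_iff)
  have Spts: "S - pts \<subseteq> \<Omega>"
  proof
    fix z assume z: "z \<in> S - pts"
    have "Re z > 0" using z c unfolding S_def by auto
    moreover have "sin (of_real pi * z) \<noteq> 0"
    proof
      assume "sin (of_real pi * z) = 0"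
      then obtain m :: int where m: "z = of_int m" using sin_pi_zero_int by blast
      have "c/2 < of_int m" "of_int m < real N + 1" using z unfolding m S_def X_def by auto
      hence "m \<ge> 1" "m \<le> int N" using c by linarith+
      hence "z \<in> pts" unfolding m pts_def
        by (intro image_eqI[of _ _ "nat m"]) auto
      thus False using z by blast
    qed
    ultimately show "z \<in> \<Omega>" unfolding \<Omega>_def by auto
  qed
  have res: "contour_integral (rectpath a1 a3) k =
      2 * pi * \<i> * (\<Sum>p\<in>pts. winding_number (rectpath a1 a3) p * residue k p)"
  proof (rule Residue_theorem)
    show "open S" unfolding S_def by (intro open_Int open_halfspace_Re_gt open_halfspace_Re_lt)
    show "connected S" unfolding S_def
      by (intro convex_connected convex_Int convex_halfspace_Re_gt convex_halfspace_Re_lt)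
    show "finite pts" unfolding pts_def by simp
    show "k holomorphic_on S - pts" by (rule holomorphic_on_subset[OF khol Spts])
    show "path_image (rectpath a1 a3) \<subseteq> S - pts"
    proof
      fix z assume z: "z \<in> path_image (rectpath a1 a3)"
      hence zc: "z \<in> cbox a1 a3 - box a1 a3" using PI by simp
      hence "z \<in> S" using cbS by blast
      moreover have "z \<notin> pts" using noint[OF zc] unfolding pts_def
        by (metis (no_types, lifting) imageE of_int_of_nat_eq)
      ultimately show "z \<in> S - pts" by blast
    qed
    show "\<forall>z. z \<notin> S \<longrightarrow> winding_number (rectpath a1 a3) z = 0"
      using cbS winding_number_rectpath_outside[OF le13] by blast
  qed (simp_all)
  have wr: "winding_number (rectpath a1 a3) p * residue k p = of_nat n powr (-s-1) / of_real pi"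
    if "p = of_nat n" "n \<in> {1..N}" for p n
  proof -
    have "p \<in> box a1 a3" using that c T1 unfolding a1_def a3_def X_def T_def
      by (auto simp: in_box_complex_iff)
    hence "winding_number (rectpath a1 a3) p = 1" by (rule winding_number_rectpath)
    moreover have "residue k p = of_nat n powr (-s-1) / of_real pi"
      unfolding k_def that(1) by (rule residue_k) (use that in auto)
    ultimately show ?thesis by simp
  qed
  have sumeq: "(\<Sum>p\<in>pts. winding_number (rectpath a1 a3) p * residue k p) =
        (\<Sum>n=1..N. of_nat n powr (-s-1) / of_real pi)"
    unfolding pts_def by (subst sum.reindex) (auto simp: inj_on_def intro!: sum.cong wr)
  have rp: "rectpath a1 a3 = linepath a1 a2 +++ linepath a2 a3 +++ linepath a3 a4 +++ linepath a4 a1"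
    unfolding rectpath_def Let_def a1_def a2_def a3_def a4_def by simp
  have pim: "path_image (rectpath a1 a3) = closed_segment a1 a2 \<union> closed_segment a2 a3 \<union> closed_segment a3 a4 \<union> closed_segment a4 a1"
    unfolding rp by (simp add: path_image_join Un_assoc)
  have li: "H contour_integrable_on linepath u v" if "closed_segment u v \<subseteq> path_image (rectpath a1 a3)" for u v
    by (rule contour_integrable_holomorphic_simple[OF Hhol o\<Omega>]) (use that PI\<Omega> in auto)
  have i12: "H contour_integrable_on linepath a1 a2" and i23: "H contour_integrable_on linepath a2 a3"
    and i34: "H contour_integrable_on linepath a3 a4" and i41: "H contour_integrable_on linepath a4 a1"
    by (rule li, unfold pim, blast)+
  have split: "contour_integral (rectpath a1 a3) H = contour_integral (linepath a1 a2) H + contour_integral (linepath a2 a3) H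
      + contour_integral (linepath a3 a4) H + contour_integral (linepath a4 a1) H"
    unfolding rp using i12 i23 i34 i41 by simp
  have contH: "continuous_on (closed_segment u v) H" if "closed_segment u v \<subseteq> path_image (rectpath a1 a3)" for u v
    using holomorphic_on_imp_continuous_on[OF Hhol] that PI\<Omega> continuous_on_subset by blast
  have HFF: "(\<lambda>t. H (Complex x t)) = FF x s" for x unfolding H_def FF_def by simp
  have l4: "contour_integral (linepath a4 a1) H = - (\<i> * integral {-T..T} (FF c s))"
  proof -
    have "contour_integral (linepath a4 a1) H = - contour_integral (linepath a1 a4) H"
      using contour_integral_reversepath[of "linepath a1 a4" H] by simp
    also have "contour_integral (linepath a1 a4) H = \<i> * integral {-T..T} (FF c s)"
      unfolding a1_def a4_def HFF[symmetric]
      by (rule contour_integral_vertical) (use T1 contH[of a1 a4] pim in \<open>auto simp: a1_def a4_def closed_segment_commute\<close>)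
    finally show ?thesis .
  qed
  have l2: "contour_integral (linepath a2 a3) H = \<i> * integral {-T..T} (FF X s)"
    unfolding a2_def a3_def HFF[symmetric]
    by (rule contour_integral_vertical) (use T1 contH[of a2 a3] pim in \<open>auto simp: a2_def a3_def\<close>)
  have "contour_integral (rectpath a1 a3) k = 2 * \<i> * (\<Sum>n=1..N. of_nat n powr (-s-1))"
    unfolding res sumeq by (simp add: sum_divide_distrib[symmetric])
  with eqHk split l4 l2 show ?thesis unfolding a1_def a2_def a3_def a4_def
    by (simp add: algebra_simps)
qed

lemma H_cont: "continuous_on {z. 0 < Re z \<and> sin (of_real pi * z) \<noteq> 0} (\<lambda>z::complex. z powr (-s) / (sin (of_real pi * z))^2)"
proof -
  have "(\<lambda>z::complex. z powr (-s) / (sin (of_real pi * z))^2) holomorphic_on {z. 0 < Re z \<and> sin (of_real pi * z) \<noteq> 0}"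
    by (intro holomorphic_intros) (auto simp: complex_nonpos_Reals_iff)
  thus ?thesis by (rule holomorphic_on_imp_continuous_on)
qed

lemma powr_bound_re:
  assumes "0 < c" "c \<le> Re z" "Re s > 0"
  shows "norm (z powr (-s)) \<le> c powr (- Re s) * exp (\<bar>Im s\<bar> * pi)"
proof -
  have "norm (z powr (-s)) \<le> norm z powr Re (-s) * exp (\<bar>Im (-s)\<bar> * pi)" by (rule norm_powr_le)
  also have "norm z powr Re (-s) \<le> c powr (- Re s)"
  proof -
    have "norm z powr (- Re s) \<le> c powr (- Re s)"
      using assms abs_Re_le_cmod[of z] by (intro powr_mono2') auto
    thus ?thesis by simp
  qed
  finally show ?thesis by (simp add: mult_right_mono)
qed

lemma horiz_bound:
  fixes s :: complex
  assumes c: "0 < c" and u: "c \<le> u1" "c \<le> u2" and s: "Re s > 0" and T: "\<bar>y\<bar> = T" "T \<ge> 1"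
  shows "norm (contour_integral (linepath (Complex u1 y) (Complex u2 y)) (\<lambda>z::complex. z powr (-s) / (sin (of_real pi * z))^2))
          \<le> (4 * (c powr (- Re s) * exp (\<bar>Im s\<bar> * pi)) / (exp (2*pi*T) - 2)) * \<bar>u2 - u1\<bar>"
proof -
  define B where "B = c powr (- Re s) * exp (\<bar>Im s\<bar> * pi)"
  have e2: "exp (2*pi*T) > 2"
  proof -
    have "2*pi*T \<ge> 2*pi" using T by simp
    hence "exp (2*pi*T) \<ge> 1 + 2*pi" using exp_ge_add_one_self[of "2*pi*T"] by linarith
    thus ?thesis using pi_gt3 by linarith
  qed
  have seg: "Re z \<ge> c \<and> Im z = y" if "z \<in> closed_segment (Complex u1 y) (Complex u2 y)" for z
    using that u by (auto simp: closed_segment_same_Im closed_segment_eq_real_ivl split: if_splits)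
  have sinlow: "norm (sin (of_real pi * z))^2 \<ge> (exp (2*pi*T) - 2) / 4" if "Im z = y" for z :: complex
  proof -
    have "of_real pi * z = Complex (pi * Re z) (pi * Im z)" by (simp add: complex_eq_iff)
    hence "norm (sin (of_real pi * z))^2 \<ge> (exp (2*\<bar>pi * Im z\<bar>) - 2) / 4"
      using norm_sin_lower2[where x="pi * Re z" and y="pi * Im z"] by simp
    thus ?thesis using that T by (simp add: abs_mult mult.assoc)
  qed
  have bd: "norm (z powr (-s) / (sin (of_real pi * z))^2) \<le> 4 * B / (exp (2*pi*T) - 2)"
    if "z \<in> closed_segment (Complex u1 y) (Complex u2 y)" for z
  proof -
    have z: "Re z \<ge> c" "Im z = y" using seg[OF that] by auto
    have "norm (z powr (-s) / (sin (of_real pi * z))^2) = norm (z powr (-s)) / norm (sin (of_real pi * z))^2"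
      by (simp add: norm_divide norm_power)
    also have "\<dots> \<le> B / ((exp (2*pi*T) - 2) / 4)"
      using powr_bound_re[OF c z(1) s] sinlow[OF z(2)] e2 unfolding B_def by (intro frac_le) auto
    finally show ?thesis by (simp add: mult.commute)
  qed
  have cont: "continuous_on (closed_segment (Complex u1 y) (Complex u2 y)) (\<lambda>z::complex. z powr (-s) / (sin (of_real pi * z))^2)"
  proof (rule continuous_on_subset[OF H_cont])
    show "closed_segment (Complex u1 y) (Complex u2 y) \<subseteq> {z. 0 < Re z \<and> sin (of_real pi * z) \<noteq> 0}"
    proof
      fix z assume zs: "z \<in> closed_segment (Complex u1 y) (Complex u2 y)"
      have "Re z > 0" using seg[OF zs] c by auto
      moreover have "norm (sin (of_real pi * z))^2 > 0" using sinlow[of z] seg[OF zs] e2 by fastforce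
      ultimately show "z \<in> {z. 0 < Re z \<and> sin (of_real pi * z) \<noteq> 0}" by auto
    qed
  qed
  have "norm (contour_integral (linepath (Complex u1 y) (Complex u2 y)) (\<lambda>z::complex. z powr (-s) / (sin (of_real pi * z))^2))
        \<le> 4 * B / (exp (2*pi*T) - 2) * norm (Complex u2 y - Complex u1 y)"
    by (rule contour_integral_bound_linepath[OF contour_integrable_continuous_linepath[OF cont]])
       (use e2 bd in \<open>auto simp: B_def\<close>)
  also have "norm (Complex u2 y - Complex u1 y) = \<bar>u2 - u1\<bar>" by (simp add: cmod_def)
  finally show ?thesis unfolding B_def .
qed

lemma sin_half: "(sin (pi * (real N + 1/2)))^2 = 1"
proof -
  have "sin (pi * (real N + 1/2)) = cos (real N * pi)"
    by (simp add: algebra_simps sin_add)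
  thus ?thesis by (simp add: cos_npi power2_eq_square power_mult_distrib[symmetric])
qed

lemma right_bound:
  fixes s :: complex
  assumes s: "Re s > 0" and X: "X = real N + 1/2" and T: "T \<ge> 0"
  shows "norm (\<i> * integral {-T..T} (FF X s)) \<le> 4 * pi * (X powr (- Re s) * exp (\<bar>Im s\<bar> * pi))"
proof -
  define B where "B = X powr (- Re s) * exp (\<bar>Im s\<bar> * pi)"
  have Xp: "X > 0" and sX: "(sin (pi * X))^2 = 1" using X sin_half[of N] by auto
  have sXnz: "sin (pi * X) \<noteq> 0" using sX by auto
  have bd: "norm (FF X s t) \<le> 4 * B * (1 / (1 + t^2))" for t
  proof -
    have nsin: "norm (sin (of_real pi * Complex X t))^2 \<ge> exp (2*pi*\<bar>t\<bar>) / 4"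
      using norm_sin_lower1[of "pi*X" "pi*t"] sX unfolding pi_Complex by (simp add: abs_mult mult.assoc)
    have npw: "norm (Complex X t powr (-s)) \<le> B"
      unfolding B_def by (rule powr_bound_re) (use Xp s in auto)
    have "norm (FF X s t) = norm (Complex X t powr (-s)) / norm (sin (of_real pi * Complex X t))^2"
      unfolding FF_def by (simp add: norm_divide norm_power)
    also have "\<dots> \<le> B / (exp (2*pi*\<bar>t\<bar>) / 4)"
      by (rule frac_le) (use nsin npw in \<open>auto simp: B_def\<close>)
    also have "\<dots> = 4 * B * exp (- (2*pi*\<bar>t\<bar>))" by (simp add: exp_minus field_simps)
    also have "\<dots> \<le> 4 * B * (1 / (1 + t^2))"
    proof (intro mult_left_mono)
      have "exp (- (2*pi*\<bar>t\<bar>)) \<le> exp (- pi * \<bar>t\<bar>)" by simp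
      thus "exp (- (2*pi*\<bar>t\<bar>)) \<le> 1 / (1 + t^2)" using exp_decay_le[of t] by linarith
    qed (auto simp: B_def)
    finally show ?thesis .
  qed
  have "norm (integral {-T..T} (FF X s)) \<le> integral {-T..T} (\<lambda>t. 4 * B * (1 / (1 + t^2)))"
  proof (rule integral_norm_bound_integral)
    show "FF X s integrable_on {-T..T}"
      by (rule integrable_continuous_real) (rule FF_cont_t[OF Xp sXnz])
    show "(\<lambda>t. 4 * B * (1 / (1 + t^2))) integrable_on {-T..T}"
      by (intro cmul_real_int) (use D_has_integral[of "-T" T] T in \<open>auto simp: integrable_on_def\<close>)
  qed (rule bd)
  also have "\<dots> = 4 * B * (2 * arctan T)"
    using D_has_integral[of "-T" T] T integral_mult[of "\<lambda>t. 1/(1+t^2)" "{-T..T}" "4*B"]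
    by (auto simp: integral_unique arctan_minus integrable_on_def)
  also have "\<dots> \<le> 4 * B * pi"
    using arctan_bounded[of T] by (intro mult_left_mono) (auto simp: B_def)
  finally show ?thesis unfolding B_def by (simp add: norm_mult mult_ac)
qed

lemma sum_shift1: "(\<Sum>n=1..N. g n) = (\<Sum>n<N. g (Suc n))"
  by (induction N) auto

lemma zeta_series_lim:
  fixes s :: complex
  assumes "Re s > 0"
  shows "(\<lambda>N. \<Sum>n=1..N. of_nat n powr (-s-1)) \<longlonglongrightarrow> (\<Sum>n. 1 / of_nat (Suc n) powr (s+1))"
proof -
  define f where "f = (\<lambda>n. 1 / (of_nat (Suc n) :: complex) powr (s+1))"
  have eq: "of_nat (Suc n) powr (-s-1) = f n" for n
  proof -
    have "-s-1 = -(s+1)" by simp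
    hence "(of_nat (Suc n) :: complex) powr (-s-1) = of_nat (Suc n) powr (-(s+1))" by (simp only:)
    also have "\<dots> = f n" unfolding f_def powr_minus by (simp add: divide_inverse)
    finally show ?thesis .
  qed
  have "summable (\<lambda>n. exp (of_real (ln (of_nat n)) * (-s-1)))"
    by (rule summable_complex_powr_iff) (use assms in simp)
  hence "summable (\<lambda>n. exp (of_real (ln (of_nat (n+1))) * (-s-1)))"
    by (rule summable_ignore_initial_segment)
  moreover have "exp (of_real (ln (of_nat (n+1))) * (-s-1)) = f n" for n
  proof -
    have L: "Ln (of_nat (Suc n) :: complex) = of_real (ln (of_nat (Suc n)))" by (rule Ln_of_nat) simp
    have nz: "(of_nat (Suc n) :: complex) \<noteq> 0" by (simp only: of_nat_eq_0_iff)
    have "exp (of_real (ln (of_nat (n+1))) * (-s-1)) = (of_nat (Suc n) :: complex) powr (-s-1)"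
      unfolding powr_def using L nz by (simp add: mult.commute)
    thus ?thesis using eq by simp
  qed
  ultimately have sf: "summable f" by simp
  have "(\<lambda>N. \<Sum>n<N. f n) \<longlonglongrightarrow> suminf f" by (rule summable_LIMSEQ[OF sf])
  moreover have "(\<Sum>n=1..N. of_nat n powr (-s-1)) = (\<Sum>n<N. f n)" for N
    unfolding sum_shift1 eq by simp
  ultimately show ?thesis unfolding f_def by simp
qed

lemma main_formula:
  assumes c: "0 < c" "c < 1" and s: "Re s > 0"
  shows "gg c s = 2 * s / of_real pi * (\<Sum>n. 1 / of_nat (Suc n) powr (s+1))"
proof -
  define Z where "Z = (\<Sum>n. 1 / (of_nat (Suc n) :: complex) powr (s+1))"
  define H where "H = (\<lambda>z::complex. z powr (-s) / (sin (of_real pi * z))^2)"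
  define E where "E = (\<lambda>N::nat. contour_integral (linepath (Complex c (- real N)) (Complex (real N + 1/2) (- real N))) H
         + \<i> * integral {- real N..real N} (FF (real N + 1/2) s)
         + contour_integral (linepath (Complex (real N + 1/2) (real N)) (Complex c (real N))) H)"
  define B1 where "B1 = c powr (- Re s) * exp (\<bar>Im s\<bar> * pi)"
  define B2 where "B2 = exp (\<bar>Im s\<bar> * pi)"
  define b where "b = (\<lambda>N::nat. 2 * ((4 * B1 / (exp (2*pi*real N) - 2)) * (real N + 1/2 - c))
                      + 4 * pi * ((real N + 1/2) powr (- Re s) * B2))"
  have id: "\<i> * integral {-real N..real N} (FF c s) = E N + (2 * \<i> * s / of_real pi) * (\<Sum>n=1..N. of_nat n powr (-s-1))"
    if "N \<ge> 1" for N
    using rect_identity[OF c that, of s] unfolding E_def H_def by simp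
  have Ebd: "norm (E N) \<le> b N" if N: "N \<ge> 1" for N
  proof -
    have T: "real N \<ge> 1" using N by simp
    have h1: "norm (contour_integral (linepath (Complex c (- real N)) (Complex (real N + 1/2) (- real N))) H)
        \<le> (4 * B1 / (exp (2*pi*real N) - 2)) * (real N + 1/2 - c)"
      using horiz_bound[of c c "real N + 1/2" s "- real N" "real N"] c s T
      unfolding H_def B1_def by simp
    have h3: "norm (contour_integral (linepath (Complex (real N + 1/2) (real N)) (Complex c (real N))) H)
        \<le> (4 * B1 / (exp (2*pi*real N) - 2)) * (real N + 1/2 - c)"
      using horiz_bound[of c "real N + 1/2" c s "real N" "real N"] c s T
      unfolding H_def B1_def by simp
    have h2: "norm (\<i> * integral {- real N..real N} (FF (real N + 1/2) s)) \<le> 4 * pi * ((real N + 1/2) powr (- Re s) * B2)"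
      using right_bound[OF s refl, of "real N" N] unfolding B2_def by simp
    have "norm (E N) \<le> norm (contour_integral (linepath (Complex c (- real N)) (Complex (real N + 1/2) (- real N))) H)
         + norm (\<i> * integral {- real N..real N} (FF (real N + 1/2) s))
         + norm (contour_integral (linepath (Complex (real N + 1/2) (real N)) (Complex c (real N))) H)"
      unfolding E_def by (rule order.trans[OF norm_triangle_ineq add_right_mono[OF norm_triangle_ineq]])
    also have "\<dots> \<le> (4 * B1 / (exp (2*pi*real N) - 2)) * (real N + 1/2 - c) + 4 * pi * ((real N + 1/2) powr (- Re s) * B2)
          + (4 * B1 / (exp (2*pi*real N) - 2)) * (real N + 1/2 - c)"
      by (rule add_mono[OF add_mono[OF h1 h2] h3])
    also have "\<dots> = b N" unfolding b_def by simp
    finally show ?thesis .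
  qed
  have b0: "b \<longlonglongrightarrow> 0"
  proof -
    have l1: "(\<lambda>N::nat. (4 * B1 / (exp (2*pi*real N) - 2)) * (real N + 1/2 - c)) \<longlonglongrightarrow> 0"
      by real_asymp
    have "filterlim (\<lambda>N::nat. real N + 1/2) at_top sequentially"
      by real_asymp
    hence l2: "(\<lambda>N::nat. (real N + 1/2) powr (- Re s)) \<longlonglongrightarrow> 0"
      using tendsto_neg_powr[of "- Re s" "\<lambda>N::nat. real N + 1/2" sequentially] s by simp
    have "b \<longlonglongrightarrow> 2 * 0 + 4 * pi * (0 * B2)"
      unfolding b_def by (intro tendsto_intros l1 l2)
    thus ?thesis by simp
  qed
  have E0: "E \<longlonglongrightarrow> 0"
    by (rule Lim_null_comparison[OF _ b0]) (use Ebd in \<open>auto simp: eventually_sequentially\<close>)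
  have "(\<lambda>N. E N + (2 * \<i> * s / of_real pi) * (\<Sum>n=1..N. of_nat n powr (-s-1))) \<longlonglongrightarrow> 0 + (2 * \<i> * s / of_real pi) * Z"
    unfolding Z_def by (intro tendsto_intros E0 zeta_series_lim s)
  hence lim0: "(\<lambda>N. E N + (2 * \<i> * s / of_real pi) * (\<Sum>n=1..N. of_nat n powr (-s-1))) \<longlonglongrightarrow> (2 * \<i> * s / of_real pi) * Z"
    by simp
  have ev: "\<forall>\<^sub>F N in sequentially. E N + (2 * \<i> * s / of_real pi) * (\<Sum>n=1..N. of_nat n powr (-s-1))
              = \<i> * integral {-real N..real N} (FF c s)"
    unfolding eventually_sequentially by (intro exI[of _ 1] allI impI) (simp add: id)
  have lim1: "(\<lambda>N. \<i> * integral {-real N..real N} (FF c s)) \<longlonglongrightarrow> (2 * \<i> * s / of_real pi) * Z"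
    by (rule Lim_transform_eventually[OF lim0 ev])
  have lim2: "(\<lambda>N. \<i> * integral {-real N..real N} (FF c s)) \<longlonglongrightarrow> \<i> * gg c s"
    by (intro tendsto_intros gg_integrable(2)[OF c])
  have "\<i> * gg c s = (2 * \<i> * s / of_real pi) * Z" using LIMSEQ_unique[OF lim2 lim1] .
  hence "gg c s = (2 * s / of_real pi) * Z" by (simp add: field_simps)
  thus ?thesis unfolding Z_def by simp
qed

lemma zeta_eq:
  assumes c: "0 < c" "c < 1"
  defines "G \<equiv> (\<lambda>w. if w = 1 then 0 else of_real pi / (2 * (w - 1)) * gg c (w - 1))"
  shows "zeta = G"
proof -
  define P where "P = (\<lambda>f::complex\<Rightarrow>complex. f holomorphic_on (- {1}) \<and>
     (\<forall>s. 1 < Re s \<longrightarrow> f s = (\<Sum>n. 1 / (of_nat (Suc n)) powr s)) \<and> f 1 = 0)"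
  have hol0: "(\<lambda>w. of_real pi / (2 * (w - 1)) * gg c (w - 1)) holomorphic_on (- {1})"
  proof -
    have "(gg c \<circ> (\<lambda>w. w - 1)) holomorphic_on (- {1})"
      by (rule holomorphic_on_compose) (auto intro: holomorphic_intros holomorphic_on_subset[OF gg_holo[OF c]])
    hence "(\<lambda>w. gg c (w - 1)) holomorphic_on (- {1})" by (simp add: o_def)
    thus ?thesis by (intro holomorphic_intros) auto
  qed
  have holG: "G holomorphic_on (- {1})"
    by (rule holomorphic_transform[OF hol0]) (auto simp: G_def)
  have serG: "G w = (\<Sum>n. 1 / (of_nat (Suc n)) powr w)" if "1 < Re w" for w
  proof -
    define s where "s = w - 1"
    have w: "w = s + 1" "s \<noteq> 0" "Re s > 0" using that unfolding s_def by auto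
    have "G w = of_real pi / (2 * s) * gg c s" unfolding G_def s_def using w by auto
    also have "\<dots> = of_real pi / (2 * s) * (2 * s / of_real pi * (\<Sum>n. 1 / of_nat (Suc n) powr (s+1)))"
      using main_formula[OF c w(3)] by simp
    also have "\<dots> = (\<Sum>n. 1 / of_nat (Suc n) powr (s+1))" using w(2) by (simp add: field_simps)
    finally show ?thesis using w(1) by simp
  qed
  have PG: "P G" unfolding P_def using holG serG by (auto simp: G_def)
  have uniq: "f = G" if "P f" for f
  proof
    fix w
    show "f w = G w"
    proof (cases "w = 1")
      case True thus ?thesis using that unfolding P_def G_def by auto
    next
      case False
      show ?thesis
      proof (rule analytic_continuation_open[where s = "{w. 1 < Re w}" and s' = "- {1}" and f = f and g = G and z = w])
        show "open {w::complex. 1 < Re w}" by (rule open_halfspace_Re_gt)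
        show "open (- {1::complex})" by auto
        show "{w::complex. 1 < Re w} \<noteq> {}" by (auto intro!: exI[of _ 2])
        show "connected (- {1::complex})" by (rule connected_punctured_universe) simp
        show "{w::complex. 1 < Re w} \<subseteq> - {1}" by auto
        show "f holomorphic_on - {1}" using that unfolding P_def by auto
        show "G holomorphic_on - {1}" by (rule holG)
        show "\<And>z. z \<in> {w. 1 < Re w} \<Longrightarrow> f z = G z" using that serG unfolding P_def by auto
        show "w \<in> - {1}" using False by auto
      qed
    qed
  qed
  show ?thesis unfolding zeta_def P_def[symmetric] using PG uniq by (rule the_equality)
qed

theorem mainTheorem3:
  fixes c :: real and s :: complex
  assumes "0 < c" and "c < 1" and "s \<noteq> 0"
  shows "(\<lambda>t::real. (Complex c t) powr (- s) / (sin (of_real pi * Complex c t))\<^sup>2) integrable_on UNIV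
    \<and> zeta (s + 1) = of_real pi / (2 * s) *
        integral UNIV (\<lambda>t::real. (Complex c t) powr (- s) / (sin (of_real pi * Complex c t))\<^sup>2)"
proof -
  have FFe: "(\<lambda>t::real. (Complex c t) powr (- s) / (sin (of_real pi * Complex c t))\<^sup>2) = FF c s"
    by (simp add: fun_eq_iff FF_def)
  have "zeta (s + 1) = of_real pi / (2 * s) * gg c s"
    unfolding zeta_eq[OF assms(1,2)] using assms(3) by simp
  thus ?thesis unfolding FFe gg_def using gg_integrable(1)[OF assms(1,2)] by simp
qed

end
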